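(* Let $r\ge 2$ and $(\boldsymbol\lambda,\mathbf{s})\in\mathcal{A}_e^r$. Then the map $\eta\circ\Psi_r$ restricts to a bijection from the $\approx_e$-equivalence class of $(\boldsymbol\lambda,\mathbf{s})$ in $\mathcal{A}_e^r$ onto the $\approx_r$-equivalence class of $\eta(\Psi_r(\boldsymbol\lambda,\mathbf{s}))$ in $\mathcal{A}_r^e$.
   Context: Fix an integer $e\ge 2$. A partition is a weakly decreasing sequence $\lambda=(\lambda_1,\lambda_2,\dots)$ of non-negative integers with finite sum $|\lambda|$; $\Lambda$ denotes the set of partitions and $\Lambda^{(m)}$ the set of $m$-multipartitions, i.e. $m$-tuples $\boldsymbol\lambda=(\lambda^{(1)},\dots,\lambda^{(m)})$ of partitions, with $|\boldsymbol\lambda|=\sum_k|\lambda^{(k)}|$. A $\beta$-set is a subset $B\subseteq\mathbb{Z}$ containing all sufficiently small integers and no sufficiently large ones. For $\lambda\in\Lambda$ and $s\in\mathbb{Z}$ set $B_s(\lambda)=\{\lambda_i-i+s : i\ge 1\}$; every $\beta$-set equals $B_s(\lambda)$ for a unique pair $(\lambda,s)$. For $N\ge 2$ let $\mathcal{A}_N=\Lambda\times\mathbb{Z}$ (abacus configurations with $N$ runners) and $\mathcal{A}_N^m=\Lambda^{(m)}\times\mathbb{Z}^m$, where $(\boldsymbol\lambda,\mathbf{s})$ is identified with the $m$-tuple of $\beta$-sets $(B_{s_1}(\lambda^{(1)}),\dots,B_{s_m}(\lambda^{(m)}))$. Blocks: for $(\boldsymbol\lambda,\mathbf{s})\in\mathcal{A}_N^m$,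 its $N$-residue multiset is the multiset of the values $s_k+y-x \bmod N$ over all nodes $(x,y,k)$ with $x\ge1$, $1\le y\le\lambda^{(k)}_x$, $1\le k\le m$. Define $(\boldsymbol\lambda,\mathbf{s})\approx_N(\boldsymbol\mu,\mathbf{s}')$ iff $\mathbf{s}=\mathbf{s}'$, $|\boldsymbol\lambda|=|\boldsymbol\mu|$ and the $N$-residue multisets coincide. Its equivalence classes are called blocks. The map $\eta$: for $(\lambda,s)\in\mathcal{A}_e$ with $B=B_s(\lambda)$ and $0\le i<e$, the set $C_i=\{(b-i)/e : b\in B,\ b\equiv i \bmod e\}$ is a $\beta$-set, so $C_i=B_{t_i}(\rho_i)$ for a unique $(\rho_i,t_i)\in\Lambda\times\mathbb{Z}$; set $\eta(\lambda,s)=((\rho_0,\dots,\rho_{e-1}),(t_0,\dots,t_{e-1}))\in\Lambda^{(e)}\times\mathbb{Z}^e$, which we also regard as an element of $\mathcal{A}_r^e$. Uglov's map: for $1\le k\le r$ define $\psi_k:\mathbb{Z}\to\mathbb{Z}$ by $\psi_k(ae+i)=((a+1)r-k)e+i$ for $a\in\mathbb{Z}$, $0\le i<e$. For $(\boldsymbol\lambda,\mathbf{s})\in\mathcal{A}_e^r$ the set $B=\bigsqcup_{k=1}^r\psi_k(B_{s_k}(\lambda^{(k)}))$ is a $\beta$-set, and $\Psi_r(\boldsymbol\lambda,\mathbf{s})$ is the unique $(\tilde\lambda,\tilde s)\in\mathcal{A}_e$ with $B_{\tilde s}(\tilde\lambda)=B$. $\Psi_r:\mathcal{A}_e^r\to\mathcal{A}_e$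 is a bijection; $\Phi_r=\Psi_r^{-1}$. *)

theory Defs
  imports "HOL-Library.Multiset"
begin

definition is_partition :: "nat list \<Rightarrow> bool" where
  "is_partition xs \<longleftrightarrow> sorted_wrt (\<ge>) xs \<and> (\<forall>x\<in>set xs. 0 < x)"

definition part :: "nat list \<Rightarrow> nat \<Rightarrow> nat" where
  "part xs i = (if 1 \<le> i \<and> i \<le> length xs then xs ! (i - 1) else 0)"

definition psize :: "nat list \<Rightarrow> nat" where
  "psize xs = sum_list xs"

definition beta_set :: "int \<Rightarrow> nat list \<Rightarrow> int set" where
  "beta_set s xs = {int (part xs i) - int i + s | i. 1 \<le> i}"

definition is_beta_set :: "int set \<Rightarrow> bool" where
  "is_beta_set B \<longleftrightarrow> (\<exists>n. \<forall>x\<le>n. x \<in> B) \<and> (\<exists>n. \<forall>x\<ge>n. x \<notin> B)"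

definition from_beta :: "int set \<Rightarrow> nat list \<times> int" where
  "from_beta B = (THE p. is_partition (fst p) \<and> beta_set (snd p) (fst p) = B)"

text \<open>A_N = Lambda x Z (as a set, independent of N).\<close>
definition config1 :: "(nat list \<times> int) set" where
  "config1 = {(xs, s). is_partition xs}"

text \<open>A_N^m = Lambda^(m) x Z^m; m-tuples as lists of length m (component k is list index k-1).\<close>
definition configm :: "nat \<Rightarrow> (nat list list \<times> int list) set" where
  "configm m = {(ls, ss). length ls = m \<and> length ss = m \<and> (\<forall>l\<in>set ls. is_partition l)}"

definition msize :: "nat list list \<Rightarrow> nat" where
  "msize ls = (\<Sum>l\<leftarrow>ls. psize l)"

text \<open>Nodes (x, y, k) with k a 0-based component index.\<close>
definition nodes :: "nat list list \<Rightarrow> (nat \<times> nat \<times> nat) set" where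
  "nodes ls = {(x, y, k). k < length ls \<and> 1 \<le> x \<and> 1 \<le> y \<and> y \<le> part (ls ! k) x}"

definition residues :: "nat \<Rightarrow> nat list list \<times> int list \<Rightarrow> int multiset" where
  "residues N c = image_mset (\<lambda>(x, y, k). (snd c ! k + int y - int x) mod int N)
                              (mset_set (nodes (fst c)))"

definition block_rel :: "nat \<Rightarrow> nat list list \<times> int list \<Rightarrow> nat list list \<times> int list \<Rightarrow> bool" where
  "block_rel N c d \<longleftrightarrow> snd c = snd d \<and> msize (fst c) = msize (fst d)
                        \<and> residues N c = residues N d"

text \<open>The \<approx>_N-equivalence class of c inside A_N^m.\<close>
definition block :: "nat \<Rightarrow> nat \<Rightarrow> nat list list \<times> int list \<Rightarrow> (nat list list \<times> int list) set" where
  "block N m c = {d \<in> configm m. block_rel N c d}"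

definition eta :: "nat \<Rightarrow> nat list \<times> int \<Rightarrow> nat list list \<times> int list" where
  "eta e c = (let B = beta_set (snd c) (fst c);
                  C = (\<lambda>i. from_beta {(b - int i) div int e | b. b \<in> B \<and> b mod int e = int i})
              in (map (\<lambda>i. fst (C i)) [0..<e], map (\<lambda>i. snd (C i)) [0..<e]))"

definition psi :: "nat \<Rightarrow> nat \<Rightarrow> nat \<Rightarrow> int \<Rightarrow> int" where
  "psi e r k b = ((b div int e + 1) * int r - int k) * int e + b mod int e"

definition Uglov :: "nat \<Rightarrow> nat \<Rightarrow> nat list list \<times> int list \<Rightarrow> nat list \<times> int" where
  "Uglov e r c = from_beta (\<Union>k\<in>{1..r}. psi e r k ` beta_set (snd c ! (k - 1)) (fst c ! (k - 1)))"

end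

theory Submission
  imports Defs
begin


definition bpt :: "int \<Rightarrow> nat list \<Rightarrow> nat \<Rightarrow> int" where
  "bpt s xs i = int (part xs i) - int i + s"

lemma beta_set_bpt: "beta_set s xs = bpt s xs ` {1..}"
  unfolding beta_set_def bpt_def by auto

lemma part_ge_len: "length xs < i \<Longrightarrow> part xs i = 0"
  by (simp add: part_def)

lemma part_pos_le: "0 < part xs i \<Longrightarrow> 1 \<le> i \<and> i \<le> length xs"
  by (simp add: part_def split: if_splits)

lemma part_mono:
  assumes "is_partition xs" "1 \<le> i" "i \<le> j"
  shows "part xs j \<le> part xs i"
proof (cases "j \<le> length xs")
  case True
  have so: "sorted_wrt (\<ge>) xs" using assms(1) by (simp add: is_partition_def)
  show ?thesis
  proof (cases "i = j")
    case False
    then have "xs ! (j - 1) \<le> xs ! (i - 1)"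
      using sorted_wrt_nth_less[OF so, of "i - 1" "j - 1"] True assms by auto
    then show ?thesis using True assms by (auto simp: part_def)
  qed simp
next
  case False
  then show ?thesis by (simp add: part_def)
qed

lemma part_pos:
  assumes "is_partition xs" "1 \<le> i" "i \<le> length xs"
  shows "0 < part xs i"
  using assms by (auto simp: part_def is_partition_def)

lemma bpt_strict:
  assumes "is_partition xs" "1 \<le> i" "i < j"
  shows "bpt s xs j < bpt s xs i"
  using part_mono[OF assms(1,2), of j] assms(3) unfolding bpt_def by linarith

lemma bpt_inj:
  assumes "is_partition xs" "1 \<le> i" "1 \<le> j" "bpt s xs i = bpt s xs j"
  shows "i = j"
  using bpt_strict[OF assms(1)] assms by (metis linorder_neqE_nat less_irrefl)

lemma bpt_large: "length xs < i \<Longrightarrow> bpt s xs i = s - int i"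
  by (simp add: bpt_def part_ge_len)

lemma sum_list_part: "sum_list xs = (\<Sum>i\<in>{1..length xs}. part xs i)"
proof -
  have "sum_list xs = (\<Sum>i=0..<length xs. xs ! i)" by (simp add: sum_list_sum_nth)
  also have "\<dots> = (\<Sum>i\<in>{1..length xs}. part xs i)"
    by (rule sum.reindex_bij_witness[where i="\<lambda>i. i - 1" and j="\<lambda>i. i + 1"])
       (auto simp: part_def)
  finally show ?thesis .
qed

lemma strict_dec_unique:
  fixes f g :: "nat \<Rightarrow> int"
  assumes f: "\<And>i j. 1 \<le> i \<Longrightarrow> i < j \<Longrightarrow> f j < f i"
      and g: "\<And>i j. 1 \<le> i \<Longrightarrow> i < j \<Longrightarrow> g j < g i"
      and im: "f ` {1..} = g ` {1..}"
  shows "1 \<le> n \<Longrightarrow> f n = g n"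
proof (induction n rule: less_induct)
  case (less n)
  show ?case
  proof (rule ccontr)
    assume ne: "f n \<noteq> g n"
    show False
    proof (cases "f n < g n")
      case True
      have "g n \<in> f ` {1..}" using im less.prems by auto
      then obtain m where m: "1 \<le> m" "g n = f m" by auto
      have "m < n" using True m f[of n m] less.prems
        by (metis linorder_neqE_nat not_less_iff_gr_or_eq)
      then have "f m = g m" using less.IH m by auto
      then show False using g[of m n] m \<open>m < n\<close> by auto
    next
      case False
      then have lt: "g n < f n" using ne by auto
      have "f n \<in> g ` {1..}" using im less.prems by auto
      then obtain m where m: "1 \<le> m" "f n = g m" by auto
      have "m < n" using lt m g[of n m] less.prems
        by (metis linorder_neqE_nat not_less_iff_gr_or_eq)
      then have "f m = g m" using less.IH m by auto
      then show False using f[of m n] m \<open>m < n\<close> by auto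
    qed
  qed
qed

lemma beta_set_unique:
  assumes px: "is_partition xs" and py: "is_partition ys"
      and eq: "beta_set s xs = beta_set t ys"
  shows "s = t \<and> xs = ys"
proof -
  have fg: "\<And>n. 1 \<le> n \<Longrightarrow> bpt s xs n = bpt t ys n"
    by (rule strict_dec_unique[OF bpt_strict[OF px] bpt_strict[OF py]])
       (use eq in \<open>auto simp: beta_set_bpt\<close>)
  define n where "n = Suc (length xs + length ys)"
  have "bpt s xs n = bpt t ys n" using fg n_def by auto
  then have st: "s = t" using bpt_large[of xs n s] bpt_large[of ys n t] n_def by auto
  have pp: "part xs i = part ys i" if "1 \<le> i" for i
    using fg[OF that] st by (simp add: bpt_def)
  have len: "length xs = length ys"
  proof (rule ccontr)
    assume "length xs \<noteq> length ys"
    then consider "length xs < length ys" | "length ys < length xs" by linarith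
    then show False
    proof cases
      case 1
      then have "0 < part ys (length ys)" by (intro part_pos[OF py]) auto
      moreover have "part xs (length ys) = 0" using 1 by (simp add: part_ge_len)
      ultimately show False using pp[of "length ys"] 1 by auto
    next
      case 2
      then have "0 < part xs (length xs)" by (intro part_pos[OF px]) auto
      moreover have "part ys (length xs) = 0" using 2 by (simp add: part_ge_len)
      ultimately show False using pp[of "length xs"] 2 by auto
    qed
  qed
  have "xs = ys"
  proof (rule nth_equalityI[OF len])
    fix i assume "i < length xs"
    then show "xs ! i = ys ! i" using pp[of "Suc i"] len by (simp add: part_def)
  qed
  with st show ?thesis by simp
qed

lemma beta_set_nil: "beta_set (M + 1) [] = {x. x \<le> M}"
proof -
  have "x \<in> beta_set (M + 1) []" if "x \<le> M" for x
  proof -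
    have "x = int (part [] (nat (M+1-x))) - int (nat (M+1-x)) + (M+1) \<and> 1 \<le> nat (M+1-x)"
      using that by (simp add: part_def)
    then show ?thesis unfolding beta_set_def by blast
  qed
  moreover have "beta_set (M+1) [] \<subseteq> {x. x \<le> M}" by (auto simp: beta_set_def part_def)
  ultimately show ?thesis by blast
qed

lemma beta_set_step:
  "beta_set (s + 1) ys = insert (int (part ys 1) + s) (beta_set s (tl ys))"
proof -
  have shift: "bpt (s + 1) ys (Suc i) = bpt s (tl ys) i" if "1 \<le> i" for i
    using that by (cases ys) (auto simp: bpt_def part_def nth_tl)
  have "bpt s ys ` {1..} = insert (bpt s ys 1) (bpt s ys ` {2..})" for s ys
  proof -
    have "{1..} = insert (1::nat) {2..}" by auto
    then show ?thesis by simp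
  qed
  moreover have "bpt (s+1) ys ` {2..} = bpt s (tl ys) ` {1..}"
  proof -
    have "{2..} = Suc ` {1::nat..}"
    proof (intro set_eqI iffI)
      fix x :: nat assume "x \<in> {2..}"
      then have "x = Suc (x - 1) \<and> x - 1 \<in> {1..}" by auto
      then show "x \<in> Suc ` {1..}" by blast
    qed auto
    then show ?thesis using shift by (auto simp: image_image)
  qed
  ultimately show ?thesis by (simp add: beta_set_bpt bpt_def)
qed

lemma beta_exists_aux:
  "\<forall>B. finite (B \<inter> {M<..}) \<and> (\<forall>x\<le>M. x \<in> B) \<and> card (B \<inter> {M<..}) = n
     \<longrightarrow> (\<exists>s xs. is_partition xs \<and> beta_set s xs = B)"
proof (induction n)
  case 0
  show ?case
  proof (intro allI impI)
    fix B :: "int set" assume h: "finite (B \<inter> {M<..}) \<and> (\<forall>x\<le>M. x \<in> B) \<and> card (B \<inter> {M<..}) = 0"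
    then have e: "B \<inter> {M<..} = {}" using card_0_eq by blast
    have "B = {x. x \<le> M}"
    proof (intro set_eqI iffI)
      fix x assume "x \<in> B"
      then show "x \<in> {x. x \<le> M}" using e by (auto simp: not_le[symmetric])
    qed (use h in auto)
    then show "\<exists>s xs. is_partition xs \<and> beta_set s xs = B"
      using beta_set_nil[of M] by (intro exI[of _ "M+1"] exI[of _ "[]"]) (auto simp: is_partition_def)
  qed
next
  case (Suc n)
  show ?case
  proof (intro allI impI)
    fix B :: "int set" assume h: "finite (B \<inter> {M<..}) \<and> (\<forall>x\<le>M. x \<in> B) \<and> card (B \<inter> {M<..}) = Suc n"
    define F where "F = B \<inter> {M<..}"
    have fin: "finite F" and ne: "F \<noteq> {}" using h by (auto simp: F_def)
    define p where "p = Max F"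
    have pF: "p \<in> F" using fin ne by (simp add: p_def)
    have pmax: "x \<le> p" if "x \<in> B" for x
    proof (cases "x \<le> M")
      case True then show ?thesis using pF F_def by auto
    next
      case False then show ?thesis using that fin by (auto simp: p_def F_def)
    qed
    define B' where "B' = B - {p}"
    have "B' \<inter> {M<..} = F - {p}" by (auto simp: B'_def F_def)
    then have "finite (B' \<inter> {M<..}) \<and> (\<forall>x\<le>M. x \<in> B') \<and> card (B' \<inter> {M<..}) = n"
      using h pF fin by (auto simp: B'_def F_def)
    then obtain s xs where px: "is_partition xs" and bs: "beta_set s xs = B'"
      using Suc.IH by blast
    have b1: "bpt s xs 1 \<in> B'" using bs by (auto simp: beta_set_bpt)
    then have lt: "bpt s xs 1 < p" using pmax[of "bpt s xs 1"] by (auto simp: B'_def)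
    have ps: "s \<le> p" using lt by (simp add: bpt_def)
    define ys where "ys = (if 0 < p - s then nat (p - s) # xs else xs)"
    have py: "is_partition ys"
    proof (cases "0 < p - s")
      case True
      have "\<forall>x\<in>set xs. x \<le> nat (p - s)"
      proof
        fix x assume "x \<in> set xs"
        then obtain i where "i < length xs" "xs ! i = x" by (auto simp: in_set_conv_nth)
        then have "x \<le> part xs 1" using part_mono[OF px, of 1 "Suc i"]
          by (simp add: part_def)
        then show "x \<le> nat (p - s)" using lt by (simp add: bpt_def)
      qed
      then show ?thesis using True px by (simp add: ys_def is_partition_def)
    next
      case False then show ?thesis using px by (simp add: ys_def)
    qed
    have xs_nil: "xs = []" if "\<not> 0 < p - s"
    proof (rule ccontr)
      assume "xs \<noteq> []"
      then have "0 < part xs 1" using part_pos[OF px, of 1] by (cases xs) auto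
      then show False using lt that by (simp add: bpt_def)
    qed
    have "beta_set (s + 1) ys = insert (int (part ys 1) + s) (beta_set s (tl ys))"
      by (rule beta_set_step)
    also have "\<dots> = insert p B'"
    proof (cases "0 < p - s")
      case True then show ?thesis using bs by (simp add: ys_def part_def)
    next
      case False
      then have "xs = []" "p = s" using xs_nil ps by auto
      then show ?thesis using bs by (simp add: ys_def part_def)
    qed
    also have "\<dots> = B" using pF by (auto simp: B'_def F_def)
    finally show "\<exists>s xs. is_partition xs \<and> beta_set s xs = B" using py by blast
  qed
qed

lemma beta_exists:
  assumes "is_beta_set B"
  shows "\<exists>s xs. is_partition xs \<and> beta_set s xs = B"
proof -
  obtain M where M: "\<forall>x\<le>M. x \<in> B" using assms by (auto simp: is_beta_set_def)
  obtain U where U: "\<forall>x\<ge>U. x \<notin> B" using assms by (auto simp: is_beta_set_def)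
  have "B \<inter> {M<..} \<subseteq> {M<..<U}" using U by (auto simp: not_le[symmetric])
  then have "finite (B \<inter> {M<..})" by (rule finite_subset) simp
  then show ?thesis using beta_exists_aux M by blast
qed

lemma from_beta_spec:
  assumes "is_beta_set B"
  shows "is_partition (fst (from_beta B)) \<and> beta_set (snd (from_beta B)) (fst (from_beta B)) = B"
proof -
  have "\<exists>!p. is_partition (fst p) \<and> beta_set (snd p) (fst p) = B"
  proof -
    obtain s xs where "is_partition xs" "beta_set s xs = B" using beta_exists[OF assms] by blast
    then show ?thesis
      by (intro ex1I[of _ "(xs, s)"]) (auto dest: beta_set_unique)
  qed
  then show ?thesis unfolding from_beta_def by (rule theI')
qed

lemma from_beta_beta_set:
  assumes "is_partition xs"
  shows "from_beta (beta_set s xs) = (xs, s)"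
  unfolding from_beta_def
  by (rule the_equality) (use assms in \<open>auto dest: beta_set_unique\<close>)




definition ind :: "int set \<Rightarrow> int \<Rightarrow> int" where
  "ind X x = (if x \<in> X then 1 else 0)"

definition Dl :: "(int \<Rightarrow> int) \<Rightarrow> int \<Rightarrow> nat list \<Rightarrow> int" where
  "Dl f s xs = (\<Sum>i\<in>{1..length xs}. f (bpt s xs i) - f (s - int i))"

lemma sum_delta_inj:
  assumes "inj_on g A" "finite A"
  shows "(\<Sum>i\<in>A. (of_bool (x = g i) :: int)) = of_bool (x \<in> g ` A)"
proof -
  have "(\<Sum>i\<in>A. (of_bool (x = g i) :: int)) = (\<Sum>y\<in>g ` A. of_bool (x = y))"
    using sum.reindex[OF assms(1), of "\<lambda>y. (of_bool (x = y) :: int)"] by simp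
  also have "\<dots> = of_bool (x \<in> g ` A)"
    using assms(2) by (simp add: sum.delta)
  finally show ?thesis .
qed

lemma beta_set_split:
  assumes px: "is_partition xs"
  shows "beta_set s xs = bpt s xs ` {1..length xs} \<union> {x. x < s - int (length xs)}"
proof -
  have "{1..} = {1..length xs} \<union> {length xs<..}" by auto
  then have "beta_set s xs = bpt s xs ` {1..length xs} \<union> bpt s xs ` {length xs<..}"
    by (simp add: beta_set_bpt image_Un)
  moreover have "bpt s xs ` {length xs<..} = {x. x < s - int (length xs)}"
  proof (intro set_eqI iffI)
    fix x assume "x \<in> bpt s xs ` {length xs<..}"
    then show "x \<in> {x. x < s - int (length xs)}" by (auto simp: bpt_large)
  next
    fix x assume "x \<in> {x. x < s - int (length xs)}"
    then have "x = bpt s xs (nat (s - x)) \<and> nat (s - x) \<in> {length xs<..}"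
      by (auto simp: bpt_large)
    then show "x \<in> bpt s xs ` {length xs<..}" by blast
  qed
  ultimately show ?thesis by simp
qed

lemma bpt_lower:
  assumes "is_partition xs" "1 \<le> i" "i \<le> length xs"
  shows "s - int i + 1 \<le> bpt s xs i"
  using part_pos[OF assms] by (simp add: bpt_def)

lemma pointwise:
  assumes px: "is_partition xs"
  shows "ind (beta_set s xs) x - of_bool (x < s)
       = (\<Sum>i\<in>{1..length xs}. of_bool (x = bpt s xs i) - of_bool (x = s - int i))"
proof -
  let ?n = "length xs"
  have inj1: "inj_on (bpt s xs) {1..?n}"
    by (rule inj_onI) (use bpt_inj[OF px] in auto)
  have inj2: "inj_on (\<lambda>i. s - int i) {1..?n}" by (rule inj_onI) auto
  have s1: "(\<Sum>i\<in>{1..?n}. (of_bool (x = bpt s xs i)::int)) = of_bool (x \<in> bpt s xs ` {1..?n})"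
    by (rule sum_delta_inj[OF inj1]) simp
  have s2: "(\<Sum>i\<in>{1..?n}. (of_bool (x = s - int i)::int)) = of_bool (x \<in> (\<lambda>i. s - int i) ` {1..?n})"
    by (rule sum_delta_inj[OF inj2]) simp
  have r2: "x \<in> (\<lambda>i. s - int i) ` {1..?n} \<longleftrightarrow> s - int ?n \<le> x \<and> x < s"
  proof
    assume "s - int ?n \<le> x \<and> x < s"
    then have "x = s - int (nat (s - x)) \<and> nat (s - x) \<in> {1..?n}" by auto
    then show "x \<in> (\<lambda>i. s - int i) ` {1..?n}" by blast
  qed auto
  have disj: "\<not> x < s - int ?n" if xin: "x \<in> bpt s xs ` {1..?n}"
  proof -
    obtain i where "i \<in> {1..?n}" "x = bpt s xs i" using xin by blast
    then show ?thesis using bpt_lower[OF px, of i s] by auto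
  qed
  have "ind (beta_set s xs) x = of_bool (x \<in> bpt s xs ` {1..?n}) + of_bool (x < s - int ?n)"
    using disj by (auto simp: ind_def beta_set_split[OF px])
  moreover have "(\<Sum>i\<in>{1..length xs}. (of_bool (x = bpt s xs i) - of_bool (x = s - int i) :: int))
     = of_bool (x \<in> bpt s xs ` {1..?n}) - of_bool (s - int ?n \<le> x \<and> x < s)"
    by (simp only: sum_subtractf s1 s2 r2)
  ultimately show ?thesis
    by (simp add: of_bool_def split: if_splits)
qed

lemma window_sum:
  assumes px: "is_partition xs" and fin: "finite Win"
      and pts: "\<And>i. 1 \<le> i \<Longrightarrow> i \<le> length xs \<Longrightarrow> bpt s xs i \<in> Win \<and> s - int i \<in> Win"
  shows "(\<Sum>x\<in>Win. f x * (ind (beta_set s xs) x - of_bool (x < s))) = Dl f s xs"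
proof -
  have "(\<Sum>x\<in>Win. f x * (ind (beta_set s xs) x - of_bool (x < s)))
      = (\<Sum>x\<in>Win. \<Sum>i\<in>{1..length xs}. f x * of_bool (x = bpt s xs i) - f x * of_bool (x = s - int i))"
    by (simp add: pointwise[OF px] sum_distrib_left right_diff_distrib)
  also have "\<dots> = (\<Sum>i\<in>{1..length xs}. \<Sum>x\<in>Win. f x * of_bool (x = bpt s xs i) - f x * of_bool (x = s - int i))"
    by (rule sum.swap)
  also have "\<dots> = (\<Sum>i\<in>{1..length xs}. f (bpt s xs i) - f (s - int i))"
  proof (rule sum.cong[OF refl])
    fix i assume "i \<in> {1..length xs}"
    then have "bpt s xs i \<in> Win" "s - int i \<in> Win" using pts by auto
    then have "Win \<inter> {x. x = bpt s xs i} = {bpt s xs i}" "Win \<inter> {x. x = s - int i} = {s - int i}"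
      by auto
    then show "(\<Sum>x\<in>Win. f x * of_bool (x = bpt s xs i) - f x * of_bool (x = s - int i))
          = f (bpt s xs i) - f (s - int i)"
      using fin by (simp add: sum_subtractf)
  qed
  finally show ?thesis by (simp add: Dl_def)
qed

definition bnd :: "int \<Rightarrow> nat list \<Rightarrow> int" where
  "bnd s xs = \<bar>s\<bar> + int (length xs) + int (sum_list xs) + 1"

lemma part_le_sum: "part xs i \<le> sum_list xs"
  by (auto simp: part_def intro!: member_le_sum_list)

lemma points_in:
  assumes "bnd s xs \<le> W" "1 \<le> i" "i \<le> length xs"
  shows "bpt s xs i \<in> {-W..<W} \<and> s - int i \<in> {-W..<W}"
  using assms part_le_sum[of xs i] unfolding bnd_def bpt_def by auto

definition P :: "int set \<Rightarrow> (int \<Rightarrow> int) \<Rightarrow> int set \<Rightarrow> int" where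
  "P Win f X = (\<Sum>x\<in>Win. f x * (ind X x - of_bool (x < 0)))"

definition Q :: "int set \<Rightarrow> (int \<Rightarrow> int) \<Rightarrow> int \<Rightarrow> int" where
  "Q Win f s = (\<Sum>x\<in>Win. f x * (of_bool (x < s) - of_bool (x < 0)))"

lemma P_beta:
  assumes px: "is_partition xs" and "bnd s xs \<le> W"
  shows "P {-W..<W} f (beta_set s xs) = Dl f s xs + Q {-W..<W} f s"
proof -
  have "Dl f s xs = (\<Sum>x\<in>{-W..<W}. f x * (ind (beta_set s xs) x - of_bool (x < s)))"
    by (rule window_sum[symmetric, OF px]) (use points_in assms(2) in auto)
  then show ?thesis unfolding P_def Q_def
    by (simp add: sum.distrib[symmetric] algebra_simps)
qed

lemma Q_one:
  assumes "\<bar>s\<bar> \<le> W"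
  shows "Q {-W..<W} (\<lambda>_. 1) s = s"
proof -
  have fin: "finite {-W..<W}" by simp
  have a: "{-W..<W} \<inter> {x. x < s} = {-W..<s}" using assms by auto
  have b: "{-W..<W} \<inter> {x. x < 0} = {-W..<0}" using assms by auto
  show ?thesis unfolding Q_def using assms
    by (simp add: sum_subtractf[symmetric] a b sum_subtractf; arith)
qed

lemma Dl_one: "Dl (\<lambda>_. 1) s xs = 0"
  by (simp add: Dl_def)

lemma Dl_id: "Dl (\<lambda>x. x) s xs = int (sum_list xs)"
  by (simp add: Dl_def bpt_def sum_list_part)

lemma charge_P:
  assumes px: "is_partition xs" and "bnd s xs \<le> W"
  shows "P {-W..<W} (\<lambda>_. 1) (beta_set s xs) = s"
  using P_beta[OF assms, of "\<lambda>_. 1"] Q_one[of s W] assms(2) Dl_one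
  by (simp add: bnd_def)




definition rowc :: "nat \<Rightarrow> int \<Rightarrow> nat \<Rightarrow> int \<Rightarrow> nat" where
  "rowc N c m j = card {y \<in> {1..m}. (c + int y) mod int N = j}"

lemma rowc_0 [simp]: "rowc N c 0 j = 0"
  by (simp add: rowc_def)

lemma rowc_Suc: "int (rowc N c (Suc m) j) = int (rowc N c m j) + of_bool ((c + int (Suc m)) mod int N = j)"
proof -
  have "{y \<in> {1..Suc m}. (c + int y) mod int N = j}
      = (if (c + int (Suc m)) mod int N = j then insert (Suc m) else id) {y \<in> {1..m}. (c + int y) mod int N = j}"
    by (auto simp: le_Suc_eq)
  then show ?thesis by (simp add: rowc_def)
qed

lemma mod_succ_iff:
  fixes z j :: int
  assumes "0 < N" "0 \<le> j" "j < N"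
  shows "(z + 1) mod N = (j + 1) mod N \<longleftrightarrow> z mod N = j"
proof -
  have "(z + 1) mod N = (j + 1) mod N \<longleftrightarrow> N dvd (z - j)"
    by (simp add: mod_eq_dvd_iff)
  also have "\<dots> \<longleftrightarrow> z mod N = j mod N" by (simp add: mod_eq_dvd_iff)
  also have "j mod N = j" using assms by simp
  finally show ?thesis .
qed

lemma rowdiff:
  assumes N: "0 < N" and j: "0 \<le> j" "j < int N"
  shows "int (rowc N c m j) - int (rowc N c m ((j + 1) mod int N))
       = of_bool ((c + int m) mod int N = j) - of_bool (c mod int N = j)"
proof (induction m)
  case 0 then show ?case by simp
next
  case (Suc m)
  have e: "(c + int (Suc m)) mod int N = (j + 1) mod int N \<longleftrightarrow> (c + int m) mod int N = j"
    using mod_succ_iff[of "int N" j "c + int m"] N j by (simp add: ac_simps)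
  show ?case using Suc by (simp only: rowc_Suc e)
qed

lemma sum_of_bool_mod:
  assumes "0 < N"
  shows "(\<Sum>j\<in>{0..<int N}. (of_bool (z mod int N = j) :: int)) = 1"
proof -
  have "{0..<int N} \<inter> {j. z mod int N = j} = {z mod int N}" using assms by auto
  then show ?thesis by simp
qed

lemma rowsum:
  assumes N: "0 < N"
  shows "(\<Sum>j\<in>{0..<int N}. int (rowc N c m j)) = int m"
proof (induction m)
  case 0 then show ?case by simp
next
  case (Suc m)
  then show ?case
    by (simp only: rowc_Suc sum.distrib sum_of_bool_mod[OF N])
qed

definition Cset :: "nat \<Rightarrow> int \<Rightarrow> nat list \<Rightarrow> int \<Rightarrow> (nat \<times> nat) set" where
  "Cset N s xs j = {(x, y). 1 \<le> x \<and> 1 \<le> y \<and> y \<le> part xs x \<and> (s + int y - int x) mod int N = j}"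

definition Cnt :: "nat \<Rightarrow> int \<Rightarrow> nat list \<Rightarrow> int \<Rightarrow> nat" where
  "Cnt N s xs j = card (Cset N s xs j)"

lemma Cset_Sigma:
  "Cset N s xs j = (SIGMA x:{1..length xs}. {y \<in> {1..part xs x}. (s - int x + int y) mod int N = j})"
proof -
  have "x \<le> length xs" if "1 \<le> y" "y \<le> part xs x" for x y
    using part_pos_le[of xs x] that by auto
  then show ?thesis unfolding Cset_def by (auto simp: algebra_simps)
qed

lemma finite_Cset: "finite (Cset N s xs j)"
  by (simp add: Cset_Sigma)

lemma Cnt_rows: "Cnt N s xs j = (\<Sum>x\<in>{1..length xs}. rowc N (s - int x) (part xs x) j)"
  unfolding Cnt_def Cset_Sigma rowc_def by (subst card_SigmaI) auto

lemma Cnt_diff: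
  assumes N: "0 < N" and j: "0 \<le> j" "j < int N"
  shows "int (Cnt N s xs j) - int (Cnt N s xs ((j + 1) mod int N))
       = Dl (\<lambda>z. of_bool (z mod int N = j)) s xs"
proof -
  have "int (Cnt N s xs j) - int (Cnt N s xs ((j + 1) mod int N))
      = (\<Sum>x\<in>{1..length xs}. int (rowc N (s - int x) (part xs x) j)
           - int (rowc N (s - int x) (part xs x) ((j + 1) mod int N)))"
    by (simp add: Cnt_rows sum_subtractf)
  also have "\<dots> = Dl (\<lambda>z. of_bool (z mod int N = j)) s xs"
    unfolding Dl_def
    by (rule sum.cong[OF refl], subst rowdiff[OF N j]) (simp_all add: bpt_def algebra_simps)
  finally show ?thesis .
qed

lemma Cnt_sum:
  assumes N: "0 < N"
  shows "(\<Sum>j\<in>{0..<int N}. int (Cnt N s xs j)) = int (sum_list xs)"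
proof -
  have "(\<Sum>j\<in>{0..<int N}. int (Cnt N s xs j))
      = (\<Sum>x\<in>{1..length xs}. \<Sum>j\<in>{0..<int N}. int (rowc N (s - int x) (part xs x) j))"
    by (simp add: Cnt_rows sum.swap[of _ "{0..<int N}"])
  also have "\<dots> = (\<Sum>x\<in>{1..length xs}. int (part xs x))"
    by (simp add: rowsum[OF N])
  finally show ?thesis by (simp add: sum_list_part)
qed

lemma Cnt_out:
  assumes "0 < N" "\<not> (0 \<le> j \<and> j < int N)"
  shows "Cnt N s xs j = 0"
proof -
  have "Cset N s xs j = {}" using assms unfolding Cset_def by auto
  then show ?thesis by (simp add: Cnt_def)
qed

lemma count_image_mset_set:
  assumes "finite A"
  shows "count (image_mset f (mset_set A)) j = card {a \<in> A. f a = j}"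
proof -
  have "count (image_mset f (mset_set A)) j = (\<Sum>y\<in>f -` {j} \<inter> A. 1)"
    using assms by (simp add: count_image_mset)
  also have "\<dots> = card {a \<in> A. f a = j}"
    by (simp add: vimage_def Int_def conj_commute)
  finally show ?thesis .
qed

lemma nodes_Sigma:
  "{a \<in> nodes ls. (\<lambda>(x, y, k). (ss ! k + int y - int x) mod int N) a = j}
   = (\<lambda>(k, (x, y)). (x, y, k)) ` (SIGMA k:{0..<length ls}. Cset N (ss ! k) (ls ! k) j)"
  unfolding nodes_def Cset_def by (auto simp: image_iff)

lemma nodes_finite: "finite (nodes ls)"
proof -
  have "nodes ls = {a \<in> nodes ls. (\<lambda>(x, y, k). (0 + int y - int x) mod int 1) a = 0}"
    by auto
  also have "\<dots> = (\<lambda>(k, (x, y)). (x, y, k)) ` (SIGMA k:{0..<length ls}. Cset 1 (replicate (length ls) 0 ! k) (ls ! k) 0)"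
    by (subst nodes_Sigma[symmetric]) auto
  finally show ?thesis by (simp add: finite_Cset)
qed

lemma count_residues:
  "count (residues N (ls, ss)) j = (\<Sum>k<length ls. Cnt N (ss ! k) (ls ! k) j)"
proof -
  have "count (residues N (ls, ss)) j
      = card {a \<in> nodes ls. (\<lambda>(x, y, k). (ss ! k + int y - int x) mod int N) a = j}"
    unfolding residues_def by (simp add: count_image_mset_set nodes_finite)
  also have "\<dots> = card (SIGMA k:{0..<length ls}. Cset N (ss ! k) (ls ! k) j)"
    unfolding nodes_Sigma by (rule card_image) (auto simp: inj_on_def)
  also have "\<dots> = (\<Sum>k<length ls. Cnt N (ss ! k) (ls ! k) j)"
    by (simp add: card_SigmaI finite_Cset Cnt_def atLeast0LessThan)
  finally show ?thesis .
qed




lemma cyclic_eq: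
  fixes u v :: "int \<Rightarrow> int"
  assumes N: "0 < N"
      and sm: "(\<Sum>j\<in>{0..<int N}. u j) = (\<Sum>j\<in>{0..<int N}. v j)"
      and df: "\<And>j. 0 \<le> j \<Longrightarrow> j < int N \<Longrightarrow> u j - u ((j + 1) mod int N) = v j - v ((j + 1) mod int N)"
  shows "0 \<le> j \<Longrightarrow> j < int N \<Longrightarrow> u j = v j"
proof -
  define w where "w j = u j - v j" for j
  have step: "w j = w ((j + 1) mod int N)" if "0 \<le> j" "j < int N" for j
    using df[OF that] by (simp add: w_def algebra_simps)
  have const: "n < N \<Longrightarrow> w (int n) = w 0" for n
  proof (induction n)
    case 0 then show ?case by simp
  next
    case (Suc n)
    have "w (int n) = w ((int n + 1) mod int N)" using step[of "int n"] Suc.prems by simp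
    also have "(int n + 1) mod int N = int n + 1" using Suc.prems by simp
    finally show ?case using Suc by (simp add: ac_simps)
  qed
  have "(\<Sum>j\<in>{0..<int N}. w j) = 0" using sm by (simp add: w_def sum_subtractf)
  moreover have "(\<Sum>j\<in>{0..<int N}. w j) = (\<Sum>j\<in>{0..<int N}. w 0)"
  proof (rule sum.cong[OF refl])
    fix j assume "j \<in> {0..<int N}"
    then show "w j = w 0" using const[of "nat j"] by auto
  qed
  ultimately have "w 0 = 0" using N by simp
  then show "0 \<le> j \<Longrightarrow> j < int N \<Longrightarrow> u j = v j"
    using const[of "nat j"] by (auto simp: w_def)
qed

definition indj :: "nat \<Rightarrow> int \<Rightarrow> int \<Rightarrow> int" where
  "indj N j z = of_bool (z mod int N = j)"

lemma msize_sum: "int (msize ls) = (\<Sum>k<length ls. int (sum_list (ls ! k)))"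
  unfolding msize_def psize_def
  by (simp add: sum_list_sum_nth atLeast0LessThan)


lemma block_rel_Dl:
  assumes N: "0 < N" and len: "length ls = length ls'"
  shows "block_rel N (ls, ss) (ls', ss) \<longleftrightarrow>
      (msize ls = msize ls' \<and>
       (\<forall>j\<in>{0..<int N}. (\<Sum>k<length ls. Dl (indj N j) (ss ! k) (ls ! k))
                       = (\<Sum>k<length ls. Dl (indj N j) (ss ! k) (ls' ! k))))"
proof -
  define u where "u j = (\<Sum>k<length ls. int (Cnt N (ss ! k) (ls ! k) j))" for j
  define v where "v j = (\<Sum>k<length ls. int (Cnt N (ss ! k) (ls' ! k) j))" for j
  have cu: "int (count (residues N (ls, ss)) j) = u j" for j
    by (simp add: count_residues u_def)
  have cv: "int (count (residues N (ls', ss)) j) = v j" for j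
    by (simp add: count_residues v_def len)
  have su: "(\<Sum>j\<in>{0..<int N}. u j) = int (msize ls)"
    unfolding u_def msize_sum by (subst sum.swap) (simp add: Cnt_sum[OF N])
  have sv: "(\<Sum>j\<in>{0..<int N}. v j) = int (msize ls')"
    unfolding v_def msize_sum len by (subst sum.swap) (simp add: Cnt_sum[OF N])
  have du: "u j - u ((j + 1) mod int N) = (\<Sum>k<length ls. Dl (indj N j) (ss ! k) (ls ! k))"
    if "0 \<le> j" "j < int N" for j
    unfolding u_def indj_def by (simp add: sum_subtractf[symmetric] Cnt_diff[OF N that])
  have dv: "v j - v ((j + 1) mod int N) = (\<Sum>k<length ls. Dl (indj N j) (ss ! k) (ls' ! k))"
    if "0 \<le> j" "j < int N" for j
    unfolding v_def indj_def by (simp add: sum_subtractf[symmetric] Cnt_diff[OF N that])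
  have uout: "u j = 0" "v j = 0" if "\<not> (0 \<le> j \<and> j < int N)" for j
    using Cnt_out[OF N that] by (simp_all add: u_def v_def)
  have res_iff: "residues N (ls, ss) = residues N (ls', ss) \<longleftrightarrow> (\<forall>j. u j = v j)"
    by (metis cu cv multiset_eq_iff of_nat_eq_iff)
  show ?thesis
  proof
    assume b: "block_rel N (ls, ss) (ls', ss)"
    then have "\<forall>j. u j = v j" using res_iff by (simp add: block_rel_def)
    then show "msize ls = msize ls' \<and>
       (\<forall>j\<in>{0..<int N}. (\<Sum>k<length ls. Dl (indj N j) (ss ! k) (ls ! k))
                       = (\<Sum>k<length ls. Dl (indj N j) (ss ! k) (ls' ! k)))"
      using b du dv by (auto simp: block_rel_def)
  next
    assume h: "msize ls = msize ls' \<and>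
       (\<forall>j\<in>{0..<int N}. (\<Sum>k<length ls. Dl (indj N j) (ss ! k) (ls ! k))
                       = (\<Sum>k<length ls. Dl (indj N j) (ss ! k) (ls' ! k)))"
    have "\<forall>j. u j = v j"
    proof
      fix j
      show "u j = v j"
      proof (cases "0 \<le> j \<and> j < int N")
        case True
        show ?thesis
          by (rule cyclic_eq[OF N _ _ ]) (use h su sv du dv True in auto)
      next
        case False then show ?thesis using uout by simp
      qed
    qed
    then show "block_rel N (ls, ss) (ls', ss)"
      using h res_iff by (simp add: block_rel_def)
  qed
qed




definition X :: "nat list list \<times> int list \<Rightarrow> nat \<Rightarrow> int set" where
  "X c k = beta_set (snd c ! k) (fst c ! k)"

definition goodW :: "int \<Rightarrow> nat list list \<times> int list \<Rightarrow> bool" where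
  "goodW W c \<longleftrightarrow> (\<forall>k<length (fst c). bnd (snd c ! k) (fst c ! k) \<le> W)"

lemma configm_part: "c \<in> configm m \<Longrightarrow> k < m \<Longrightarrow> is_partition (fst c ! k)"
  by (auto simp: configm_def)

lemma configm_len: "c \<in> configm m \<Longrightarrow> length (fst c) = m \<and> length (snd c) = m"
  by (auto simp: configm_def)

lemma P_X:
  assumes "c \<in> configm m" "goodW W c" "k < m"
  shows "P {-W..<W} f (X c k) = Dl f (snd c ! k) (fst c ! k) + Q {-W..<W} f (snd c ! k)"
  unfolding X_def
  by (rule P_beta) (use assms configm_part configm_len in \<open>auto simp: goodW_def\<close>)

lemma charge_X:
  assumes "c \<in> configm m" "goodW W c" "k < m"
  shows "P {-W..<W} (\<lambda>_. 1) (X c k) = snd c ! k"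
  unfolding X_def
  by (rule charge_P) (use assms configm_part configm_len in \<open>auto simp: goodW_def\<close>)

lemma block_rel_P:
  assumes N: "0 < N" and c: "c \<in> configm m" and d: "d \<in> configm m"
      and gc: "goodW W c" and gd: "goodW W d"
  shows "block_rel N c d \<longleftrightarrow>
     (\<forall>k<m. P {-W..<W} (\<lambda>_. 1) (X c k) = P {-W..<W} (\<lambda>_. 1) (X d k)) \<and>
     (\<Sum>k<m. P {-W..<W} (\<lambda>x. x) (X c k)) = (\<Sum>k<m. P {-W..<W} (\<lambda>x. x) (X d k)) \<and>
     (\<forall>j\<in>{0..<int N}. (\<Sum>k<m. P {-W..<W} (indj N j) (X c k)) = (\<Sum>k<m. P {-W..<W} (indj N j) (X d k)))"
proof -
  obtain ls ss where cc: "c = (ls, ss)" by (cases c)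
  obtain ls' ss' where dd: "d = (ls', ss')" by (cases d)
  have lens: "length ls = m" "length ss = m" "length ls' = m" "length ss' = m"
    using configm_len[OF c] configm_len[OF d] cc dd by auto
  have ch: "(\<forall>k<m. P {-W..<W} (\<lambda>_. 1) (X c k) = P {-W..<W} (\<lambda>_. 1) (X d k)) \<longleftrightarrow> ss = ss'"
    using charge_X[OF c gc] charge_X[OF d gd] lens cc dd
    by (auto intro: nth_equalityI)
  show ?thesis
  proof (cases "ss = ss'")
    case False
    then show ?thesis using ch by (simp add: block_rel_def cc dd)
  next
    case True
    have sumP: "(\<Sum>k<m. P {-W..<W} f (X c k)) = (\<Sum>k<m. Dl f (ss ! k) (ls ! k)) + (\<Sum>k<m. Q {-W..<W} f (ss ! k))"
      "(\<Sum>k<m. P {-W..<W} f (X d k)) = (\<Sum>k<m. Dl f (ss ! k) (ls' ! k)) + (\<Sum>k<m. Q {-W..<W} f (ss ! k))" for f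
      using P_X[OF c gc] P_X[OF d gd] True cc dd by (simp_all add: sum.distrib)
    have ms: "msize ls = msize ls' \<longleftrightarrow> (\<Sum>k<m. Dl (\<lambda>x. x) (ss ! k) (ls ! k)) = (\<Sum>k<m. Dl (\<lambda>x. x) (ss ! k) (ls' ! k))"
      using msize_sum[of ls] msize_sum[of ls'] lens by (simp add: Dl_id) (metis of_nat_eq_iff)
    have "block_rel N c d \<longleftrightarrow> (msize ls = msize ls' \<and>
       (\<forall>j\<in>{0..<int N}. (\<Sum>k<length ls. Dl (indj N j) (ss ! k) (ls ! k))
                       = (\<Sum>k<length ls. Dl (indj N j) (ss ! k) (ls' ! k))))"
      using block_rel_Dl[OF N, of ls ls' ss] lens True cc dd by simp
    then show ?thesis using ch True ms lens by (simp add: sumP)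
  qed
qed




lemma divmod_eq:
  fixes q i e :: int
  assumes "0 \<le> i" "i < e"
  shows "(q * e + i) div e = q \<and> (q * e + i) mod e = i"
proof -
  have e: "0 < e" using assms by simp
  have "(i + q * e) div e = i div e + q" using e by simp
  moreover have "(i + q * e) mod e = i mod e" by simp
  ultimately show ?thesis using assms by (simp add: add.commute)
qed

lemma div_lower:
  fixes y n V :: int
  assumes "0 < n" "y < -(V + 1) * n"
  shows "y div n < -V"
proof -
  have "(y div n) * n \<le> y"
    using div_mult_mod_eq[of y n] pos_mod_sign[OF assms(1), of y] by linarith
  then have "(y div n) * n < (-(V + 1)) * n" using assms(2) by simp
  then have "y div n < -(V + 1)" using assms(1) by (simp add: mult_less_cancel_right)
  then show ?thesis by simp
qed

lemma div_upper:
  fixes y n V :: int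
  assumes "0 < n" "V * n \<le> y"
  shows "V \<le> y div n"
proof -
  have "y < (y div n + 1) * n" using assms(1)
    by (metis add.commute distrib_right div_mult_mod_eq mult_1 pos_mod_bound add_less_cancel_left)
  then have "V * n < (y div n + 1) * n" using assms(2) by simp
  then have "V < y div n + 1" using assms(1) by (simp add: mult_less_cancel_right)
  then show ?thesis by simp
qed

lemma lin_lower:
  fixes q e i V :: int
  assumes "q < -V" "0 \<le> i" "i < e" "0 \<le> V"
  shows "q * e + i < -V"
proof -
  have "q \<le> -V - 1" using assms by simp
  then have "q * e \<le> (-V - 1) * e" using assms by (intro mult_right_mono) auto
  moreover have "V \<le> V * e" using assms by (simp add: mult_le_cancel_left1)
  ultimately show ?thesis using assms by (simp add: algebra_simps)
qed

lemma lin_upper: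
  fixes q e i V :: int
  assumes "V \<le> q" "0 \<le> i" "0 < e" "0 \<le> V"
  shows "V \<le> q * e + i"
proof -
  have "V * e \<le> q * e" using assms by (intro mult_right_mono) auto
  moreover have "V \<le> V * e" using assms by (simp add: mult_le_cancel_left1)
  ultimately show ?thesis using assms by linarith
qed

definition bounded :: "int \<Rightarrow> int set \<Rightarrow> bool" where
  "bounded W Z \<longleftrightarrow> (\<forall>x. x < -W \<longrightarrow> x \<in> Z) \<and> (\<forall>x. W \<le> x \<longrightarrow> x \<notin> Z)"

lemma bnd_bounded:
  assumes px: "is_partition xs" and b: "bnd s xs \<le> W"
  shows "bounded W (beta_set s xs)"
  unfolding bounded_def
proof (intro conjI allI impI)
  fix x assume "x < -W"
  then have "x < s - int (length xs)" using b by (simp add: bnd_def)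
  then show "x \<in> beta_set s xs" by (simp add: beta_set_split[OF px])
next
  fix x assume xw: "W \<le> x"
  show "x \<notin> beta_set s xs"
  proof
    assume "x \<in> beta_set s xs"
    then consider "x \<in> bpt s xs ` {1..length xs}" | "x < s - int (length xs)"
      by (auto simp: beta_set_split[OF px])
    then show False
    proof cases
      case 1
      then obtain i where "i \<in> {1..length xs}" "x = bpt s xs i" by blast
      then show False using points_in[OF b, of i] xw by auto
    next
      case 2 then show False using xw b by (simp add: bnd_def)
    qed
  qed
qed

lemma bounded_beta: "bounded W Z \<Longrightarrow> is_beta_set Z"
  unfolding bounded_def is_beta_set_def
  by (intro conjI exI[of _ "-W - 1"] exI[of _ W]) auto

lemma bounded_mono: "bounded W Z \<Longrightarrow> W \<le> W' \<Longrightarrow> bounded W' Z"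
  unfolding bounded_def by auto

definition Tset :: "nat \<Rightarrow> nat \<Rightarrow> (nat \<Rightarrow> int set) \<Rightarrow> nat \<Rightarrow> int set" where
  "Tset e r Z i = {y. (y div int r) * int e + int i \<in> Z (r - 1 - nat (y mod int r))}"

lemma Tset_bounded:
  assumes e: "0 < e" and r: "0 < r" and i: "i < e" and W: "0 \<le> W"
      and Zb: "\<And>k. k < r \<Longrightarrow> bounded W (Z k)"
  shows "bounded ((W + 1) * int r) (Tset e r Z i)"
proof -
  have A: "y \<in> Tset e r Z i" if y: "y < - ((W + 1) * int r)" for y
  proof -
    have h: "y < -(W + 1) * int r" using y by (simp add: algebra_simps)
    have "y div int r < -W" using div_lower[OF _ h] r by simp
    then have "(y div int r) * int e + int i < -W" using lin_lower i W by simp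
    moreover have "r - 1 - nat (y mod int r) < r" using r by simp
    ultimately show ?thesis
      using Zb unfolding bounded_def Tset_def by blast
  qed
  have B: "y \<notin> Tset e r Z i" if y: "(W + 1) * int r \<le> y" for y
  proof
    assume "y \<in> Tset e r Z i"
    then have m: "(y div int r) * int e + int i \<in> Z (r - 1 - nat (y mod int r))"
      by (simp add: Tset_def)
    have "W * int r \<le> y" using y r by (smt (verit) mult_right_mono of_nat_0_le_iff)
    then have "W \<le> y div int r" using div_upper r by simp
    then have "W \<le> (y div int r) * int e + int i" using lin_upper e W by simp
    moreover have "r - 1 - nat (y mod int r) < r" using r by simp
    ultimately show False using Zb m unfolding bounded_def by blast
  qed
  show ?thesis unfolding bounded_def using A B by blast
qed




definition Ug :: "nat \<Rightarrow> nat \<Rightarrow> nat list list \<times> int list \<Rightarrow> int set" where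
  "Ug e r c = (\<Union>k\<in>{1..r}. psi e r k ` beta_set (snd c ! (k - 1)) (fst c ! (k - 1)))"

lemma Uglov_Ug: "Uglov e r c = from_beta (Ug e r c)"
  by (simp add: Uglov_def Ug_def)

lemma memU:
  assumes e: "0 < e" and r: "0 < r"
  shows "x \<in> Ug e r c \<longleftrightarrow> x div int e \<in> Tset e r (X c) (nat (x mod int e))"
proof -
  have xm: "0 \<le> x mod int e" "x mod int e < int e" using e by auto
  have "x \<in> Ug e r c \<longleftrightarrow> (x div int e div int r) * int e + x mod int e \<in> X c (r - 1 - nat (x div int e mod int r))"
  proof
    assume "x \<in> Ug e r c"
    then obtain k b where k: "k \<in> {1..r}" and b: "b \<in> X c (k - 1)" and x: "x = psi e r k b"
      by (auto simp: Ug_def X_def)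
    define q where "q = b div int e"
    define i where "i = b mod int e"
    have i: "0 \<le> i" "i < int e" using e by (auto simp: i_def)
    have bqi: "b = q * int e + i" by (simp add: q_def i_def)
    have x2: "x = ((q + 1) * int r - int k) * int e + i"
      using x by (simp add: psi_def q_def i_def)
    have xd: "x div int e = (q + 1) * int r - int k" "x mod int e = i"
      using divmod_eq[OF i, of "(q + 1) * int r - int k"] x2 by auto
    have a2: "(q + 1) * int r - int k = q * int r + (int r - int k)" by (simp add: algebra_simps)
    have rk: "0 \<le> int r - int k" "int r - int k < int r" using k by auto
    have ad: "x div int e div int r = q" "x div int e mod int r = int r - int k"
      using divmod_eq[OF rk, of q] xd a2 by auto
    have "r - 1 - nat (x div int e mod int r) = k - 1" using ad k by auto
    then show "(x div int e div int r) * int e + x mod int e \<in> X c (r - 1 - nat (x div int e mod int r))"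
      using ad xd bqi b by simp
  next
    assume h: "(x div int e div int r) * int e + x mod int e \<in> X c (r - 1 - nat (x div int e mod int r))"
    define a where "a = x div int e"
    define i where "i = x mod int e"
    define k where "k = r - nat (a mod int r)"
    define b where "b = (a div int r) * int e + i"
    have am: "0 \<le> a mod int r" "a mod int r < int r" using r by auto
    have k: "k \<in> {1..r}" using am by (auto simp: k_def)
    have kk: "k - 1 = r - 1 - nat (a mod int r)" using am by (simp add: k_def)
    have b: "b \<in> X c (k - 1)" using h kk by (simp add: b_def a_def i_def)
    have i: "0 \<le> i" "i < int e" using xm by (auto simp: i_def)
    have bd: "b div int e = a div int r" "b mod int e = i"
      using divmod_eq[OF i, of "a div int r"] by (auto simp: b_def)
    have "psi e r k b = ((a div int r + 1) * int r - int k) * int e + i"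
      by (simp add: psi_def bd)
    also have "(a div int r + 1) * int r - int k = a"
    proof -
      have "int k = int r - a mod int r" using am by (simp add: k_def)
      moreover have "int r * (a div int r) + a mod int r = a" by (metis mult.commute div_mult_mod_eq)
      moreover have "(a div int r + 1) * int r = int r * (a div int r) + int r" by (simp add: algebra_simps)
      ultimately show ?thesis by linarith
    qed
    also have "a * int e + i = x" by (simp add: a_def i_def)
    finally have "x = psi e r k b" by simp
    then show "x \<in> Ug e r c" using k b unfolding Ug_def X_def by force
  qed
  also have "\<dots> \<longleftrightarrow> x div int e \<in> Tset e r (X c) (nat (x mod int e))"
    using xm by (simp add: Tset_def)
  finally show ?thesis .
qed

lemma bounded_outer:
  assumes e: "0 < e" and V: "0 \<le> V"
      and T: "\<And>i. i < e \<Longrightarrow> bounded V (T i)"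
  shows "bounded ((V + 1) * int e) {x. x div int e \<in> T (nat (x mod int e))}"
proof -
  have im: "nat (x mod int e) < e" for x using e by (simp add: nat_less_iff)
  have A: "x div int e \<in> T (nat (x mod int e))" if x: "x < - ((V + 1) * int e)" for x
  proof -
    have h: "x < -(V + 1) * int e" using x by (simp add: algebra_simps)
    have "x div int e < -V" using div_lower[OF _ h] e by simp
    then show ?thesis using T[OF im[of x]] unfolding bounded_def by blast
  qed
  have B: "x div int e \<notin> T (nat (x mod int e))" if x: "(V + 1) * int e \<le> x" for x
  proof -
    have "V * int e \<le> x" using x e by (smt (verit) mult_right_mono of_nat_0_le_iff)
    then have "V \<le> x div int e" using div_upper e by simp
    then show ?thesis using T[OF im[of x]] unfolding bounded_def by blast
  qed
  show ?thesis unfolding bounded_def using A B by blast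
qed

lemma Ug_bounded:
  assumes e: "0 < e" and r: "0 < r" and W: "0 \<le> W"
      and Zb: "\<And>k. k < r \<Longrightarrow> bounded W (X c k)"
  shows "bounded (((W + 1) * int r + 1) * int e) (Ug e r c)"
proof -
  have "Ug e r c = {x. x div int e \<in> Tset e r (X c) (nat (x mod int e))}"
    by (rule set_eqI) (simp add: memU[OF e r])
  moreover have "bounded (((W + 1) * int r + 1) * int e) {x. x div int e \<in> Tset e r (X c) (nat (x mod int e))}"
    by (rule bounded_outer[OF e]) (use W Tset_bounded[OF e r _ W Zb] in auto)
  ultimately show ?thesis by simp
qed

lemma Eset_eq:
  assumes i: "i < e"
  shows "{(b - int i) div int e | b. b \<in> B \<and> b mod int e = int i} = {y. y * int e + int i \<in> B}"
proof (intro set_eqI iffI)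
  fix y assume "y \<in> {(b - int i) div int e | b. b \<in> B \<and> b mod int e = int i}"
  then obtain b where b: "b \<in> B" "b mod int e = int i" "y = (b - int i) div int e" by blast
  have "b - int i = (b div int e) * int e" using b(2) div_mult_mod_eq[of b "int e"] by simp
  then have "y = b div int e" using b(3) i by simp
  then have "y * int e + int i = b" using b(2) div_mult_mod_eq[of b "int e"] by simp
  then show "y \<in> {y. y * int e + int i \<in> B}" using b(1) by simp
next
  fix y assume y: "y \<in> {y. y * int e + int i \<in> B}"
  have d: "(y * int e + int i) div int e = y \<and> (y * int e + int i) mod int e = int i"
    by (rule divmod_eq) (use i in auto)
  then have "y = ((y * int e + int i) - int i) div int e" using i by auto
  then show "y \<in> {(b - int i) div int e | b. b \<in> B \<and> b mod int e = int i}"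
    using y d by blast
qed

definition Fm :: "nat \<Rightarrow> nat \<Rightarrow> nat list list \<times> int list \<Rightarrow> nat list list \<times> int list" where
  "Fm e r = eta e \<circ> Uglov e r"

lemma Fm_main:
  assumes e: "0 < e" and r: "0 < r" and W: "0 \<le> W"
      and Zb: "\<And>k. k < r \<Longrightarrow> bounded W (X c k)"
  shows "Fm e r c \<in> configm e \<and> (\<forall>i<e. X (Fm e r c) i = Tset e r (X c) i)"
proof -
  let ?p = "Uglov e r c"
  have ub: "is_beta_set (Ug e r c)" by (rule bounded_beta[OF Ug_bounded[OF e r W Zb]])
  have bp: "beta_set (snd ?p) (fst ?p) = Ug e r c"
    using from_beta_spec[OF ub] by (simp add: Uglov_Ug)
  define C where "C i = from_beta {(b - int i) div int e | b. b \<in> beta_set (snd ?p) (fst ?p) \<and> b mod int e = int i}" for i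
  have Fe: "Fm e r c = (map (\<lambda>i. fst (C i)) [0..<e], map (\<lambda>i. snd (C i)) [0..<e])"
    by (simp add: Fm_def eta_def C_def Let_def)
  have Ci: "C i = from_beta (Tset e r (X c) i)" if i: "i < e" for i
  proof -
    have "{(b - int i) div int e | b. b \<in> beta_set (snd ?p) (fst ?p) \<and> b mod int e = int i}
        = {y. y * int e + int i \<in> Ug e r c}" using Eset_eq[OF i] bp by simp
    also have "\<dots> = Tset e r (X c) i"
    proof -
      have "y * int e + int i \<in> Ug e r c \<longleftrightarrow> y \<in> Tset e r (X c) i" for y
        using memU[OF e r, of "y * int e + int i" c] divmod_eq[of "int i" "int e" y] i by simp
      then show ?thesis by auto
    qed
    finally show ?thesis by (simp add: C_def)
  qed
  have Tb: "is_beta_set (Tset e r (X c) i)" if "i < e" for i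
    by (rule bounded_beta[OF Tset_bounded[OF e r that W Zb]])
  have spec: "is_partition (fst (C i)) \<and> beta_set (snd (C i)) (fst (C i)) = Tset e r (X c) i"
    if "i < e" for i
    using from_beta_spec[OF Tb[OF that]] Ci[OF that] by simp
  have "Fm e r c \<in> configm e"
    unfolding Fe configm_def using spec by auto
  moreover have "\<forall>i<e. X (Fm e r c) i = Tset e r (X c) i"
    using spec by (simp add: Fe X_def)
  ultimately show ?thesis by blast
qed




lemma X_eq_imp_eq:
  assumes c: "c \<in> configm m" and d: "d \<in> configm m" and X: "\<And>k. k < m \<Longrightarrow> X c k = X d k"
  shows "c = d"
proof -
  have comp: "fst c ! k = fst d ! k \<and> snd c ! k = snd d ! k" if k: "k < m" for k
    using beta_set_unique[OF configm_part[OF c k] configm_part[OF d k]] X[OF k]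
    by (auto simp: X_def)
  have "fst c = fst d" using configm_len[OF c] configm_len[OF d] comp
    by (intro nth_equalityI) auto
  moreover have "snd c = snd d" using configm_len[OF c] configm_len[OF d] comp
    by (intro nth_equalityI) auto
  ultimately show ?thesis by (simp add: prod_eq_iff)
qed

lemma exists_W:
  assumes c: "c \<in> configm m"
  shows "\<exists>W\<ge>0. \<forall>k<m. bnd (snd c ! k) (fst c ! k) \<le> W"
proof -
  define W where "W = (\<Sum>k<m. bnd (snd c ! k) (fst c ! k))"
  have pos: "0 \<le> bnd s xs" for s xs by (simp add: bnd_def)
  have "bnd (snd c ! k) (fst c ! k) \<le> W" if "k < m" for k
    unfolding W_def using that pos by (intro member_le_sum) auto
  moreover have "0 \<le> W" unfolding W_def using pos by (simp add: sum_nonneg)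
  ultimately show ?thesis by blast
qed

lemma bnd_X_bounded:
  assumes c: "c \<in> configm m" and k: "k < m" and b: "bnd (snd c ! k) (fst c ! k) \<le> W"
  shows "bounded W (X c k)"
  unfolding X_def by (rule bnd_bounded[OF configm_part[OF c k] b])

lemma Tset_inv:
  assumes e: "0 < e" and r: "0 < r" and k: "k < r"
  shows "x \<in> Z k \<longleftrightarrow> (x div int e) * int r + int (r - 1 - k) \<in> Tset e r Z (nat (x mod int e))"
proof -
  have kk: "0 \<le> int (r - 1 - k)" "int (r - 1 - k) < int r" using k by auto
  have d: "((x div int e) * int r + int (r - 1 - k)) div int r = x div int e"
          "((x div int e) * int r + int (r - 1 - k)) mod int r = int (r - 1 - k)"
    using divmod_eq[OF kk] by auto
  have "r - 1 - (r - 1 - k) = k" using k by simp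
  moreover have "(x div int e) * int e + x mod int e = x" by simp
  ultimately show ?thesis using d e by (simp add: Tset_def)
qed

lemma Fm_inj:
  assumes e: "0 < e" and r: "0 < r" and c: "c \<in> configm r" and d: "d \<in> configm r"
      and eq: "Fm e r c = Fm e r d"
  shows "c = d"
proof -
  obtain Wc where Wc: "0 \<le> Wc" "\<forall>k<r. bnd (snd c ! k) (fst c ! k) \<le> Wc" using exists_W[OF c] by blast
  obtain Wd where Wd: "0 \<le> Wd" "\<forall>k<r. bnd (snd d ! k) (fst d ! k) \<le> Wd" using exists_W[OF d] by blast
  have bc: "\<forall>k<r. bounded Wc (X c k)" using bnd_X_bounded[OF c] Wc by blast
  have bd: "\<forall>k<r. bounded Wd (X d k)" using bnd_X_bounded[OF d] Wd by blast
  have Tc: "\<forall>i<e. X (Fm e r c) i = Tset e r (X c) i" using Fm_main[OF e r Wc(1)] bc by blast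
  have Td: "\<forall>i<e. X (Fm e r d) i = Tset e r (X d) i" using Fm_main[OF e r Wd(1)] bd by blast
  have TT: "Tset e r (X c) i = Tset e r (X d) i" if "i < e" for i
    using Tc Td eq that by metis
  show ?thesis
  proof (rule X_eq_imp_eq[OF c d])
    fix k assume k: "k < r"
    show "X c k = X d k"
    proof (rule set_eqI)
      fix x
      have im: "nat (x mod int e) < e" using e by (simp add: nat_less_iff)
      show "x \<in> X c k \<longleftrightarrow> x \<in> X d k"
        using Tset_inv[OF e r k, of x "X c"] Tset_inv[OF e r k, of x "X d"] TT[OF im] by simp
    qed
  qed
qed

lemma Fm_surj:
  assumes e: "0 < e" and r: "0 < r" and d: "d \<in> configm e"
  shows "\<exists>c\<in>configm r. Fm e r c = d"
proof -
  obtain W where W: "0 \<le> W" "\<forall>k<e. bnd (snd d ! k) (fst d ! k) \<le> W" using exists_W[OF d] by blast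
  define Z' where "Z' j = X d (e - 1 - j)" for j
  have Zb: "bounded W (Z' j)" if "j < e" for j
    unfolding Z'_def using bnd_X_bounded[OF d, of "e - 1 - j"] W that by simp
  define Bs where "Bs k = Tset r e Z' (r - 1 - k)" for k
  have Bb: "bounded ((W + 1) * int e) (Bs k)" if "k < r" for k
    unfolding Bs_def by (rule Tset_bounded[OF r e _ W(1) Zb]) (use r in auto)
  have Bmem: "x \<in> Bs k \<longleftrightarrow> (x div int e) * int r + int (r - 1 - k) \<in> X d (nat (x mod int e))"
    if k: "k < r" for k x
  proof -
    have "nat (x mod int e) < e" using e by (simp add: nat_less_iff)
    then have "e - 1 - (e - 1 - nat (x mod int e)) = nat (x mod int e)" by simp
    then show ?thesis using k by (simp add: Bs_def Tset_def Z'_def)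
  qed
  define c where "c = (map (\<lambda>k. fst (from_beta (Bs k))) [0..<r], map (\<lambda>k. snd (from_beta (Bs k))) [0..<r])"
  have spec: "is_partition (fst (from_beta (Bs k))) \<and> beta_set (snd (from_beta (Bs k))) (fst (from_beta (Bs k))) = Bs k"
    if "k < r" for k
    by (rule from_beta_spec[OF bounded_beta[OF Bb[OF that]]])
  have cin: "c \<in> configm r" unfolding c_def configm_def using spec by auto
  have Xc: "X c k = Bs k" if "k < r" for k
    using spec[OF that] that by (simp add: c_def X_def)
  have W1: "0 \<le> (W + 1) * int e" using W by simp
  have FM: "Fm e r c \<in> configm e \<and> (\<forall>i<e. X (Fm e r c) i = Tset e r (X c) i)"
    by (rule Fm_main[OF e r W1]) (use Bb Xc in auto)
  have "X (Fm e r c) i = X d i" if i: "i < e" for i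
  proof -
    have "X (Fm e r c) i = Tset e r (X c) i" using FM i by blast
    also have "\<dots> = X d i"
    proof (rule set_eqI)
      fix y
      define k where "k = r - 1 - nat (y mod int r)"
      have ym: "0 \<le> y mod int r" "y mod int r < int r" using r by auto
      have k: "k < r" using r by (simp add: k_def)
      have ii: "0 \<le> int i" "int i < int e" using i by auto
      have dm: "((y div int r) * int e + int i) div int e = y div int r"
               "((y div int r) * int e + int i) mod int e = int i"
        using divmod_eq[OF ii] by auto
      have rk: "int (r - 1 - k) = y mod int r" using ym by (simp add: k_def)
      have "y \<in> Tset e r (X c) i \<longleftrightarrow> (y div int r) * int e + int i \<in> Bs k"
        using Xc[OF k] by (simp add: Tset_def k_def)
      also have "\<dots> \<longleftrightarrow> (y div int r) * int r + y mod int r \<in> X d i"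
        using Bmem[OF k] dm rk by simp
      also have "(y div int r) * int r + y mod int r = y" by simp
      finally show "y \<in> Tset e r (X c) i \<longleftrightarrow> y \<in> X d i" .
    qed
    finally show ?thesis .
  qed
  then have "Fm e r c = d" using X_eq_imp_eq[of "Fm e r c" e d] FM d by blast
  then show ?thesis using cin by blast
qed




lemma grid_sum:
  fixes h :: "int \<Rightarrow> int"
  assumes N: "0 < N" and A: "0 \<le> A"
  shows "(\<Sum>x\<in>{-A * int N..<A * int N}. h x) = (\<Sum>i<N. \<Sum>a\<in>{-A..<A}. h (a * int N + int i))"
proof -
  have "(\<Sum>i<N. \<Sum>a\<in>{-A..<A}. h (a * int N + int i)) = (\<Sum>(i, a)\<in>{..<N} \<times> {-A..<A}. h (a * int N + int i))"
    by (rule sum.cartesian_product)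
  also have "\<dots> = (\<Sum>x\<in>{-A * int N..<A * int N}. h x)"
  proof (rule sum.reindex_bij_witness[where j = "\<lambda>(i, a). a * int N + int i"
        and i = "\<lambda>x. (nat (x mod int N), x div int N)"])
    fix p assume p: "p \<in> {..<N} \<times> {-A..<A}"
    obtain i a where pia: "p = (i, a)" by (cases p)
    have ii: "0 \<le> int i" "int i < int N" using p pia by auto
    have dm: "(a * int N + int i) div int N = a" "(a * int N + int i) mod int N = int i"
      using divmod_eq[OF ii] by auto
    show "(\<lambda>x. (nat (x mod int N), x div int N)) ((\<lambda>(i, a). a * int N + int i) p) = p"
      using dm pia by simp
    have a: "-A \<le> a" "a \<le> A - 1" using p pia by auto
    have "-A * int N \<le> a * int N" using a N by (intro mult_right_mono) auto
    moreover have "a * int N \<le> (A - 1) * int N" using a N by (intro mult_right_mono) auto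
    ultimately show "(\<lambda>(i, a). a * int N + int i) p \<in> {-A * int N..<A * int N}"
      using ii pia by (auto simp: algebra_simps)
  next
    fix x assume x: "x \<in> {-A * int N..<A * int N}"
    show "(\<lambda>(i, a). a * int N + int i) (nat (x mod int N), x div int N) = x" using N by simp
    have "-A \<le> x div int N" using div_upper[of "int N" "-A" x] N x by simp
    moreover have "x div int N < A"
    proof -
      have "(x div int N) * int N \<le> x"
        using div_mult_mod_eq[of x "int N"] pos_mod_sign[of "int N" x] N by linarith
      then have "(x div int N) * int N < A * int N" using x by simp
      then show ?thesis using N by (simp add: mult_less_cancel_right)
    qed
    moreover have "nat (x mod int N) < N" using N by (simp add: nat_less_iff)
    ultimately show "(nat (x mod int N), x div int N) \<in> {..<N} \<times> {-A..<A}" by simp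
  qed (auto)
  finally show ?thesis by simp
qed

lemma P_grid:
  assumes N: "0 < N" and A: "0 \<le> A"
  shows "P {-A * int N..<A * int N} f Z
       = (\<Sum>i<N. \<Sum>a\<in>{-A..<A}. f (a * int N + int i) * (ind Z (a * int N + int i) - of_bool (a < 0)))"
proof -
  have neg: "(a * int N + int i < 0) \<longleftrightarrow> a < 0" if "i < N" for a i
  proof
    assume "a < 0"
    then have "a * int N \<le> -1 * int N" using N by (intro mult_right_mono) auto
    then show "a * int N + int i < 0" using that by simp
  next
    assume "a * int N + int i < 0"
    then show "a < 0" using N by (smt (verit) mult_nonneg_nonneg of_nat_0_le_iff)
  qed
  show ?thesis unfolding P_def grid_sum[OF N A] using neg by simp
qed




definition gg :: "nat \<Rightarrow> nat list list \<times> int list \<Rightarrow> nat \<Rightarrow> nat \<Rightarrow> int \<Rightarrow> int" where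
  "gg e c k i a = ind (X c k) (a * int e + int i) - of_bool (a < 0)"

definition SS :: "nat \<Rightarrow> int \<Rightarrow> nat list list \<times> int list \<Rightarrow> nat \<Rightarrow> int" where
  "SS e A c k = (\<Sum>i<e. \<Sum>a\<in>{-A..<A}. gg e c k i a)"

definition TT :: "nat \<Rightarrow> nat \<Rightarrow> int \<Rightarrow> nat list list \<times> int list \<Rightarrow> nat \<Rightarrow> int" where
  "TT e r A c i = (\<Sum>k<r. \<Sum>a\<in>{-A..<A}. gg e c k i a)"

definition AS :: "nat \<Rightarrow> nat \<Rightarrow> int \<Rightarrow> nat list list \<times> int list \<Rightarrow> int" where
  "AS e r A c = (\<Sum>k<r. \<Sum>i<e. \<Sum>a\<in>{-A..<A}. a * gg e c k i a)"

lemma P_grid':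
  assumes N: "0 < N" and A: "0 \<le> A"
  shows "P {-(A * int N)..<A * int N} f Z
       = (\<Sum>i<N. \<Sum>a\<in>{-A..<A}. f (a * int N + int i) * (ind Z (a * int N + int i) - of_bool (a < 0)))"
  using P_grid[OF N A] by simp

lemma mod_small_nat: "i < e \<Longrightarrow> int i mod int e = int i"
  by simp

lemma PL_grid:
  assumes e: "0 < e" and A: "0 \<le> A"
  shows "P {-(A * int e)..<A * int e} f (X c k) = (\<Sum>i<e. \<Sum>a\<in>{-A..<A}. f (a * int e + int i) * gg e c k i a)"
  using P_grid[OF e A] by (simp add: gg_def)

lemma L1:
  assumes e: "0 < e" and A: "0 \<le> A"
  shows "P {-A * int e..<A * int e} (\<lambda>_. 1) (X c k) = SS e A c k"
  by (simp add: PL_grid[OF e A] SS_def)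

lemma Lid:
  assumes e: "0 < e" and A: "0 \<le> A"
  shows "(\<Sum>k<r. P {-A * int e..<A * int e} (\<lambda>x. x) (X c k))
       = int e * AS e r A c + (\<Sum>i<e. int i * TT e r A c i)"
proof -
  have "(\<Sum>k<r. P {-A * int e..<A * int e} (\<lambda>x. x) (X c k))
      = (\<Sum>k<r. \<Sum>i<e. \<Sum>a\<in>{-A..<A}. int e * (a * gg e c k i a) + int i * gg e c k i a)"
    by (simp add: PL_grid[OF e A] algebra_simps)
  also have "\<dots> = int e * AS e r A c + (\<Sum>k<r. \<Sum>i<e. int i * (\<Sum>a\<in>{-A..<A}. gg e c k i a))"
    by (simp add: sum.distrib sum_distrib_left AS_def)
  also have "(\<Sum>k<r. \<Sum>i<e. int i * (\<Sum>a\<in>{-A..<A}. gg e c k i a)) = (\<Sum>i<e. int i * TT e r A c i)"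
    by (subst sum.swap) (simp add: sum_distrib_left TT_def)
  finally show ?thesis .
qed

lemma Lj:
  assumes e: "0 < e" and A: "0 \<le> A" and j: "0 \<le> j" "j < int e"
  shows "(\<Sum>k<r. P {-A * int e..<A * int e} (indj e j) (X c k)) = TT e r A c (nat j)"
proof -
  have m: "(a * int e + int i) mod int e = int i" if "i < e" for a i
    using divmod_eq[of "int i" "int e" a] that by simp
  have "(\<Sum>k<r. P {-A * int e..<A * int e} (indj e j) (X c k))
      = (\<Sum>k<r. \<Sum>i<e. of_bool (int i = j) * (\<Sum>a\<in>{-A..<A}. gg e c k i a))"
    by (simp add: PL_grid[OF e A] indj_def m mod_small_nat sum_distrib_left)
  also have "\<dots> = (\<Sum>k<r. \<Sum>a\<in>{-A..<A}. gg e c k (nat j) a)"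
  proof (rule sum.cong[OF refl])
    fix k
    have "{..<e} \<inter> {i. int i = j} = {nat j}" using j by auto
    then show "(\<Sum>i<e. of_bool (int i = j) * (\<Sum>a\<in>{-A..<A}. gg e c k i a)) = (\<Sum>a\<in>{-A..<A}. gg e c k (nat j) a)"
      by simp
  qed
  finally show ?thesis by (simp add: TT_def)
qed

lemma PR_grid:
  assumes e: "0 < e" and r: "0 < r" and A: "0 \<le> A" and i: "i < e"
      and XF: "X F i = Tset e r (X c) i"
  shows "P {-(A * int r)..<A * int r} f (X F i)
       = (\<Sum>k<r. \<Sum>a\<in>{-A..<A}. f (a * int r + int (r - 1 - k)) * gg e c k i a)"
proof -
  have mem: "ind (X F i) (a * int r + int j) = ind (X c (r - 1 - j)) (a * int e + int i)" if j: "j < r" for a j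
  proof -
    have jj: "0 \<le> int j" "int j < int r" using j by auto
    show ?thesis using divmod_eq[OF jj, of a] XF by (simp add: ind_def Tset_def)
  qed
  have "P {-(A * int r)..<A * int r} f (X F i)
      = (\<Sum>j<r. \<Sum>a\<in>{-A..<A}. f (a * int r + int j) * gg e c (r - 1 - j) i a)"
    by (simp add: P_grid'[OF r A] mem gg_def)
  also have "\<dots> = (\<Sum>k<r. \<Sum>a\<in>{-A..<A}. f (a * int r + int (r - 1 - k)) * gg e c k i a)"
    by (rule sum.reindex_bij_witness[where i = "\<lambda>k. r - 1 - k" and j = "\<lambda>k. r - 1 - k"]) auto
  finally show ?thesis .
qed

lemma R1:
  assumes e: "0 < e" and r: "0 < r" and A: "0 \<le> A" and i: "i < e"
      and XF: "X F i = Tset e r (X c) i"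
  shows "P {-A * int r..<A * int r} (\<lambda>_. 1) (X F i) = TT e r A c i"
  by (simp add: PR_grid[OF e r A i XF] TT_def)

lemma Rid:
  assumes e: "0 < e" and r: "0 < r" and A: "0 \<le> A"
      and XF: "\<And>i. i < e \<Longrightarrow> X F i = Tset e r (X c) i"
  shows "(\<Sum>i<e. P {-A * int r..<A * int r} (\<lambda>x. x) (X F i))
       = int r * AS e r A c + (\<Sum>k<r. int (r - 1 - k) * SS e A c k)"
proof -
  have "(\<Sum>i<e. P {-A * int r..<A * int r} (\<lambda>x. x) (X F i))
      = (\<Sum>i<e. \<Sum>k<r. \<Sum>a\<in>{-A..<A}. int r * (a * gg e c k i a) + int (r - 1 - k) * gg e c k i a)"
    by (rule sum.cong[OF refl]) (simp add: PR_grid[OF e r A _ XF] algebra_simps)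
  also have "\<dots> = int r * (\<Sum>i<e. \<Sum>k<r. \<Sum>a\<in>{-A..<A}. a * gg e c k i a)
                 + (\<Sum>i<e. \<Sum>k<r. int (r - 1 - k) * (\<Sum>a\<in>{-A..<A}. gg e c k i a))"
    by (simp add: sum.distrib sum_distrib_left)
  also have "(\<Sum>i<e. \<Sum>k<r. \<Sum>a\<in>{-A..<A}. a * gg e c k i a) = AS e r A c"
    unfolding AS_def by (rule sum.swap)
  also have "(\<Sum>i<e. \<Sum>k<r. int (r - 1 - k) * (\<Sum>a\<in>{-A..<A}. gg e c k i a))
           = (\<Sum>k<r. int (r - 1 - k) * SS e A c k)"
    by (subst sum.swap) (simp add: sum_distrib_left SS_def)
  finally show ?thesis .
qed

lemma Rj:
  assumes e: "0 < e" and r: "0 < r" and A: "0 \<le> A" and j: "0 \<le> j" "j < int r"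
      and XF: "\<And>i. i < e \<Longrightarrow> X F i = Tset e r (X c) i"
  shows "(\<Sum>i<e. P {-A * int r..<A * int r} (indj r j) (X F i)) = SS e A c (r - 1 - nat j)"
proof -
  have m: "(a * int r + int (r - 1 - k)) mod int r = int (r - 1 - k)" if "k < r" for a k
    using divmod_eq[of "int (r - 1 - k)" "int r" a] that by simp
  have ob: "of_bool (int (r - 1 - k) = j) = (of_bool (k = r - 1 - nat j) :: int)" if "k < r" for k
    using that j by auto
  have eq1: "P {-A * int r..<A * int r} (indj r j) (X F i)
      = (\<Sum>k<r. of_bool (k = r - 1 - nat j) * (\<Sum>a\<in>{-A..<A}. gg e c k i a))" if i: "i < e" for i
  proof -
    have "P {-A * int r..<A * int r} (indj r j) (X F i)
        = (\<Sum>k<r. \<Sum>a\<in>{-A..<A}. indj r j (a * int r + int (r - 1 - k)) * gg e c k i a)"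
      using PR_grid[OF e r A i XF[OF i]] by simp
    also have "\<dots> = (\<Sum>k<r. of_bool (k = r - 1 - nat j) * (\<Sum>a\<in>{-A..<A}. gg e c k i a))"
    proof (rule sum.cong[OF refl])
      fix k assume "k \<in> {..<r}"
      then have k: "k < r" by simp
      have h: "indj r j (a * int r + int (r - 1 - k)) = of_bool (k = r - 1 - nat j)" for a
        unfolding indj_def m[OF k] ob[OF k] by (rule refl)
      show "(\<Sum>a\<in>{-A..<A}. indj r j (a * int r + int (r - 1 - k)) * gg e c k i a)
          = of_bool (k = r - 1 - nat j) * (\<Sum>a\<in>{-A..<A}. gg e c k i a)"
        by (simp only: h sum_distrib_left)
    qed
    finally show ?thesis .
  qed
  have K: "r - 1 - nat j < r" using r by simp
  have "(\<Sum>i<e. P {-A * int r..<A * int r} (indj r j) (X F i))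
      = (\<Sum>i<e. \<Sum>a\<in>{-A..<A}. gg e c (r - 1 - nat j) i a)"
  proof (rule sum.cong[OF refl])
    fix i assume "i \<in> {..<e}"
    then have "P {-A * int r..<A * int r} (indj r j) (X F i)
      = (\<Sum>k<r. of_bool (k = r - 1 - nat j) * (\<Sum>a\<in>{-A..<A}. gg e c k i a))" using eq1 by simp
    also have "\<dots> = (\<Sum>a\<in>{-A..<A}. gg e c (r - 1 - nat j) i a)"
    proof -
      have "{..<r} \<inter> {k. k = r - 1 - nat j} = {r - 1 - nat j}" using K by auto
      then show ?thesis by (simp only: sum_of_bool_mult_eq[OF finite_lessThan]) simp
    qed
    finally show "P {-A * int r..<A * int r} (indj r j) (X F i) = (\<Sum>a\<in>{-A..<A}. gg e c (r - 1 - nat j) i a)" .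
  qed
  then show ?thesis by (simp add: SS_def)
qed




lemma le_mult_N: "0 \<le> (A::int) \<Longrightarrow> 0 < N \<Longrightarrow> A \<le> A * int N"
  by (simp add: mult_le_cancel_left1)

lemma KEY:
  assumes e: "0 < e" and r: "0 < r" and c: "c \<in> configm r" and d: "d \<in> configm r"
  shows "block_rel e c d \<longleftrightarrow> block_rel r (Fm e r c) (Fm e r d)"
proof -
  obtain Wc where Wc: "0 \<le> Wc" "\<forall>k<r. bnd (snd c ! k) (fst c ! k) \<le> Wc" using exists_W[OF c] by blast
  obtain Wd where Wd: "0 \<le> Wd" "\<forall>k<r. bnd (snd d ! k) (fst d ! k) \<le> Wd" using exists_W[OF d] by blast
  have bc: "\<forall>k<r. bounded Wc (X c k)" using bnd_X_bounded[OF c] Wc by blast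
  have bd: "\<forall>k<r. bounded Wd (X d k)" using bnd_X_bounded[OF d] Wd by blast
  have FMc: "Fm e r c \<in> configm e \<and> (\<forall>i<e. X (Fm e r c) i = Tset e r (X c) i)"
    using Fm_main[OF e r Wc(1)] bc by blast
  have FMd: "Fm e r d \<in> configm e \<and> (\<forall>i<e. X (Fm e r d) i = Tset e r (X d) i)"
    using Fm_main[OF e r Wd(1)] bd by blast
  obtain W1 where W1: "0 \<le> W1" "\<forall>k<e. bnd (snd (Fm e r c) ! k) (fst (Fm e r c) ! k) \<le> W1"
    using exists_W FMc by blast
  obtain W2 where W2: "0 \<le> W2" "\<forall>k<e. bnd (snd (Fm e r d) ! k) (fst (Fm e r d) ! k) \<le> W2"
    using exists_W FMd by blast
  define A where "A = Wc + Wd + W1 + W2"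
  have A0: "0 \<le> A" using Wc Wd W1 W2 by (simp add: A_def)
  have Ae: "A \<le> A * int e" and Ar: "A \<le> A * int r" using le_mult_N A0 e r by auto
  have gc: "goodW (A * int e) c" using Wc Wd W1 W2 Ae configm_len[OF c]
    by (auto simp: goodW_def A_def)
  have gd: "goodW (A * int e) d" using Wc Wd W1 W2 Ae configm_len[OF d]
    by (auto simp: goodW_def A_def)
  have gFc: "goodW (A * int r) (Fm e r c)"
    unfolding goodW_def
  proof (intro allI impI)
    fix k assume "k < length (fst (Fm e r c))"
    then have "k < e" using configm_len[of "Fm e r c" e] FMc by simp
    then have "bnd (snd (Fm e r c) ! k) (fst (Fm e r c) ! k) \<le> W1" using W1 by blast
    then show "bnd (snd (Fm e r c) ! k) (fst (Fm e r c) ! k) \<le> A * int r"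
      using Wc Wd W1 W2 Ar unfolding A_def by linarith
  qed
  have gFd: "goodW (A * int r) (Fm e r d)"
    unfolding goodW_def
  proof (intro allI impI)
    fix k assume "k < length (fst (Fm e r d))"
    then have "k < e" using configm_len[of "Fm e r d" e] FMd by simp
    then have "bnd (snd (Fm e r d) ! k) (fst (Fm e r d) ! k) \<le> W2" using W2 by blast
    then show "bnd (snd (Fm e r d) ! k) (fst (Fm e r d) ! k) \<le> A * int r"
      using Wc Wd W1 W2 Ar unfolding A_def by linarith
  qed
  have XFc: "\<And>i. i < e \<Longrightarrow> X (Fm e r c) i = Tset e r (X c) i" using FMc by blast
  have XFd: "\<And>i. i < e \<Longrightarrow> X (Fm e r d) i = Tset e r (X d) i" using FMd by blast

  have LHS: "block_rel e c d \<longleftrightarrow>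
     (\<forall>k<r. SS e A c k = SS e A d k) \<and>
     int e * AS e r A c + (\<Sum>i<e. int i * TT e r A c i) = int e * AS e r A d + (\<Sum>i<e. int i * TT e r A d i) \<and>
     (\<forall>j\<in>{0..<int e}. TT e r A c (nat j) = TT e r A d (nat j))"
  proof -
    have "block_rel e c d \<longleftrightarrow>
     (\<forall>k<r. P {-(A * int e)..<A * int e} (\<lambda>_. 1) (X c k) = P {-(A * int e)..<A * int e} (\<lambda>_. 1) (X d k)) \<and>
     (\<Sum>k<r. P {-(A * int e)..<A * int e} (\<lambda>x. x) (X c k)) = (\<Sum>k<r. P {-(A * int e)..<A * int e} (\<lambda>x. x) (X d k)) \<and>
     (\<forall>j\<in>{0..<int e}. (\<Sum>k<r. P {-(A * int e)..<A * int e} (indj e j) (X c k)) = (\<Sum>k<r. P {-(A * int e)..<A * int e} (indj e j) (X d k)))"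
      using block_rel_P[OF e c d gc gd] by simp
    moreover have "\<And>k. P {-(A * int e)..<A * int e} (\<lambda>_. 1) (X c k) = SS e A c k"
      using L1[OF e A0] by simp
    moreover have "\<And>k. P {-(A * int e)..<A * int e} (\<lambda>_. 1) (X d k) = SS e A d k"
      using L1[OF e A0] by simp
    moreover have "(\<Sum>k<r. P {-(A * int e)..<A * int e} (\<lambda>x. x) (X c k)) = int e * AS e r A c + (\<Sum>i<e. int i * TT e r A c i)"
      using Lid[OF e A0] by simp
    moreover have "(\<Sum>k<r. P {-(A * int e)..<A * int e} (\<lambda>x. x) (X d k)) = int e * AS e r A d + (\<Sum>i<e. int i * TT e r A d i)"
      using Lid[OF e A0] by simp
    moreover have "\<And>j. 0 \<le> j \<Longrightarrow> j < int e \<Longrightarrow> (\<Sum>k<r. P {-(A * int e)..<A * int e} (indj e j) (X c k)) = TT e r A c (nat j)"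
      using Lj[OF e A0] by simp
    moreover have "\<And>j. 0 \<le> j \<Longrightarrow> j < int e \<Longrightarrow> (\<Sum>k<r. P {-(A * int e)..<A * int e} (indj e j) (X d k)) = TT e r A d (nat j)"
      using Lj[OF e A0] by simp
    ultimately show ?thesis by auto
  qed
  have RHS: "block_rel r (Fm e r c) (Fm e r d) \<longleftrightarrow>
     (\<forall>i<e. TT e r A c i = TT e r A d i) \<and>
     int r * AS e r A c + (\<Sum>k<r. int (r - 1 - k) * SS e A c k) = int r * AS e r A d + (\<Sum>k<r. int (r - 1 - k) * SS e A d k) \<and>
     (\<forall>j\<in>{0..<int r}. SS e A c (r - 1 - nat j) = SS e A d (r - 1 - nat j))"
  proof -
    have "block_rel r (Fm e r c) (Fm e r d) \<longleftrightarrow>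
      (\<forall>k<e. P {-(A * int r)..<A * int r} (\<lambda>_. 1) (X (Fm e r c) k) = P {-(A * int r)..<A * int r} (\<lambda>_. 1) (X (Fm e r d) k)) \<and>
      (\<Sum>k<e. P {-(A * int r)..<A * int r} (\<lambda>x. x) (X (Fm e r c) k)) = (\<Sum>k<e. P {-(A * int r)..<A * int r} (\<lambda>x. x) (X (Fm e r d) k)) \<and>
      (\<forall>j\<in>{0..<int r}. (\<Sum>k<e. P {-(A * int r)..<A * int r} (indj r j) (X (Fm e r c) k)) = (\<Sum>k<e. P {-(A * int r)..<A * int r} (indj r j) (X (Fm e r d) k)))"
      using block_rel_P[OF r conjunct1[OF FMc] conjunct1[OF FMd] gFc gFd] by simp
    moreover have "(\<forall>k<e. P {-(A * int r)..<A * int r} (\<lambda>_. 1) (X (Fm e r c) k) = P {-(A * int r)..<A * int r} (\<lambda>_. 1) (X (Fm e r d) k))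
       \<longleftrightarrow> (\<forall>i<e. TT e r A c i = TT e r A d i)"
      using R1[OF e r A0 _ XFc] R1[OF e r A0 _ XFd] by simp
    moreover have "(\<Sum>k<e. P {-(A * int r)..<A * int r} (\<lambda>x. x) (X (Fm e r c) k)) = int r * AS e r A c + (\<Sum>k<r. int (r - 1 - k) * SS e A c k)"
      using Rid[OF e r A0 XFc] by simp
    moreover have "(\<Sum>k<e. P {-(A * int r)..<A * int r} (\<lambda>x. x) (X (Fm e r d) k)) = int r * AS e r A d + (\<Sum>k<r. int (r - 1 - k) * SS e A d k)"
      using Rid[OF e r A0 XFd] by simp
    moreover have "\<And>j. 0 \<le> j \<Longrightarrow> j < int r \<Longrightarrow> (\<Sum>k<e. P {-(A * int r)..<A * int r} (indj r j) (X (Fm e r c) k)) = SS e A c (r - 1 - nat j)"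
      using Rj[OF e r A0 _ _ XFc] by simp
    moreover have "\<And>j. 0 \<le> j \<Longrightarrow> j < int r \<Longrightarrow> (\<Sum>k<e. P {-(A * int r)..<A * int r} (indj r j) (X (Fm e r d) k)) = SS e A d (r - 1 - nat j)"
      using Rj[OF e r A0 _ _ XFd] by simp
    ultimately show ?thesis by auto
  qed
  have Teq: "(\<forall>j\<in>{0..<int e}. TT e r A c (nat j) = TT e r A d (nat j)) \<longleftrightarrow> (\<forall>i<e. TT e r A c i = TT e r A d i)"
  proof
    assume h: "\<forall>j\<in>{0..<int e}. TT e r A c (nat j) = TT e r A d (nat j)"
    show "\<forall>i<e. TT e r A c i = TT e r A d i"
    proof (intro allI impI)
      fix i assume "i < e" then show "TT e r A c i = TT e r A d i" using h[rule_format, of "int i"] by simp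
    qed
  qed auto
  have Seq: "(\<forall>j\<in>{0..<int r}. SS e A c (r - 1 - nat j) = SS e A d (r - 1 - nat j)) \<longleftrightarrow> (\<forall>k<r. SS e A c k = SS e A d k)"
  proof
    assume h: "\<forall>j\<in>{0..<int r}. SS e A c (r - 1 - nat j) = SS e A d (r - 1 - nat j)"
    show "\<forall>k<r. SS e A c k = SS e A d k"
    proof (intro allI impI)
      fix k assume k: "k < r"
      have "r - 1 - nat (int (r - 1 - k)) = k" using k by simp
      then show "SS e A c k = SS e A d k" using h[rule_format, of "int (r - 1 - k)"] k by simp
    qed
  qed auto
  show ?thesis
  proof (cases "(\<forall>k<r. SS e A c k = SS e A d k) \<and> (\<forall>i<e. TT e r A c i = TT e r A d i)")
    case False
    then show ?thesis using LHS RHS Teq Seq by blast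
  next
    case True
    then have s1: "(\<Sum>i<e. int i * TT e r A c i) = (\<Sum>i<e. int i * TT e r A d i)"
      and s2: "(\<Sum>k<r. int (r - 1 - k) * SS e A c k) = (\<Sum>k<r. int (r - 1 - k) * SS e A d k)"
      by (auto intro!: sum.cong)
    have "int e * AS e r A c + (\<Sum>i<e. int i * TT e r A c i) = int e * AS e r A d + (\<Sum>i<e. int i * TT e r A d i)
        \<longleftrightarrow> AS e r A c = AS e r A d" using s1 e by simp
    moreover have "int r * AS e r A c + (\<Sum>k<r. int (r - 1 - k) * SS e A c k) = int r * AS e r A d + (\<Sum>k<r. int (r - 1 - k) * SS e A d k)
        \<longleftrightarrow> AS e r A c = AS e r A d" using s2 r by simp
    ultimately show ?thesis using LHS RHS Teq Seq True by blast
  qed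
qed

theorem corollary2p14:
  fixes e r :: nat and c :: "nat list list \<times> int list"
  assumes "2 \<le> e" and "2 \<le> r" and "c \<in> configm r"
  shows "bij_betw (eta e \<circ> Uglov e r) (block e r c) (block r e (eta e (Uglov e r c)))"
proof -
  have e: "0 < e" and r: "0 < r" using assms by auto
  have c: "c \<in> configm r" by fact
  have F: "eta e \<circ> Uglov e r = Fm e r" by (simp add: Fm_def)
  have F2: "eta e (Uglov e r c) = Fm e r c" by (simp add: Fm_def)
  have inj: "inj_on (Fm e r) (block e r c)"
    by (rule inj_onI) (use Fm_inj[OF e r] in \<open>auto simp: block_def\<close>)
  have img: "Fm e r ` block e r c = block r e (Fm e r c)"
  proof (intro set_eqI iffI)
    fix y assume "y \<in> Fm e r ` block e r c"
    then obtain d where d: "d \<in> configm r" "block_rel e c d" "y = Fm e r d" by (auto simp: block_def)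
    obtain W where W: "0 \<le> W" "\<forall>k<r. bnd (snd d ! k) (fst d ! k) \<le> W" using exists_W[OF d(1)] by blast
    have "Fm e r d \<in> configm e"
      using Fm_main[OF e r W(1)] bnd_X_bounded[OF d(1)] W by blast
    then show "y \<in> block r e (Fm e r c)" using d KEY[OF e r c d(1)] by (simp add: block_def)
  next
    fix y assume "y \<in> block r e (Fm e r c)"
    then have y: "y \<in> configm e" "block_rel r (Fm e r c) y" by (auto simp: block_def)
    obtain d where d: "d \<in> configm r" "Fm e r d = y" using Fm_surj[OF e r y(1)] by blast
    have "block_rel e c d" using KEY[OF e r c d(1)] y d by simp
    then show "y \<in> Fm e r ` block e r c" using d by (auto simp: block_def)
  qed
  show ?thesis unfolding F F2 bij_betw_def using inj img by blast
qed


end
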